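(* Assume (A) or (B), with $\alpha=a$ in case (A) and $\alpha=b$ in case (B). For every $1\le r<\infty$ there is $C>0$ depending only on $\alpha,r,n$ such that $$\|\Gamma(x,\cdot,t)\|_{L^{r,1}(w)}\le C\,t^{-\frac{n+\alpha}{2}\left(1-\frac1r\right)}\quad\text{for all }x\in\mathbb{R}^n,\ t>0.$$
   Context: (A): $w(x)=|x_1|^a$ on $\mathbb{R}^n$ with $a\in[0,1)$; (B): $w(x)=|x|^b$ with $b\in[0,n)$. $\Gamma$ is the fundamental solution of $\partial_t v-w^{-1}\operatorname{div}(w\nabla v)=0$ with pole at $(y,0)$, assumed to satisfy (K1) $\int\Gamma(x,y,t)w(x)dx=\int\Gamma(x,y,t)w(y)dy=1$; (K2) $\Gamma(x,y,t)=\int\Gamma(x,\xi,t-s)\Gamma(\xi,y,s)w(\xi)d\xi$ for $t>s>0$; (K3) $c_*e^{-|x-y|^2/(c_*t)}\le \sqrt{w(B(x,\sqrt t))w(B(y,\sqrt t))}\,\Gamma(x,y,t)\le C_*e^{-|x-y|^2/(C_*t)}$ with $c_*,C_*>0$ depending on $n,\alpha$, where $w(E)=\int_E w$. $\mu_f(\lambda)=w(\{|f|>\lambda\})$, $f^*(s)=\inf\{\lambda>0:\mu_f(\lambda)\le s\}$, and $\|f\|_{L^{r,1}(w)}=\int_0^\infty s^{1/r-1}f^*(s)\,ds$. *)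

theory Defs
  imports "HOL-Analysis.Analysis"
begin

text \<open>Points of R^n are vectors real^'n, n = CARD('n). The coordinate x_1 is x $ i1
  for a designated index i1.\<close>

definition weightA :: "'n::finite \<Rightarrow> real \<Rightarrow> real^'n \<Rightarrow> real" where
  "weightA i1 a x = (if a = 0 then 1 else \<bar>x $ i1\<bar> powr a)"

definition weightB :: "real \<Rightarrow> real^'n::finite \<Rightarrow> real" where
  "weightB b x = (if b = 0 then 1 else norm x powr b)"

definition wmeasure :: "(real^'n::finite \<Rightarrow> real) \<Rightarrow> (real^'n) measure" where
  "wmeasure w = density lborel (\<lambda>x. ennreal (w x))"

definition wvol :: "(real^'n::finite \<Rightarrow> real) \<Rightarrow> (real^'n) set \<Rightarrow> real" where
  "wvol w E = measure (wmeasure w) E"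

definition distfun :: "(real^'n::finite \<Rightarrow> real) \<Rightarrow> (real^'n \<Rightarrow> real) \<Rightarrow> real \<Rightarrow> ennreal" where
  "distfun w f lam = emeasure (wmeasure w) {x. \<bar>f x\<bar> > lam}"

text \<open>decreasing rearrangement f*(s) = inf{lambda > 0 : mu_f(lambda) <= s} (infimum of the
  empty set is +infinity)\<close>
definition rearr :: "(real^'n::finite \<Rightarrow> real) \<Rightarrow> (real^'n \<Rightarrow> real) \<Rightarrow> real \<Rightarrow> ennreal" where
  "rearr w f s = (INF lam \<in> {lam::real. lam > 0 \<and> distfun w f lam \<le> ennreal s}. ennreal lam)"

definition lorentz_norm :: "(real^'n::finite \<Rightarrow> real) \<Rightarrow> real \<Rightarrow> (real^'n \<Rightarrow> real) \<Rightarrow> ennreal" where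
  "lorentz_norm w r f = (\<integral>\<^sup>+ s. indicator {0<..} s * ennreal (s powr (1/r - 1)) * rearr w f s \<partial>lborel)"

text \<open>Hypotheses (K1)-(K3) on Gamma(x,y,t), with constants cs = c_*, Cs = C_*.\<close>
definition heat_kernel_hyps ::
  "(real^'n::finite \<Rightarrow> real) \<Rightarrow> real \<Rightarrow> real \<Rightarrow> (real^'n \<Rightarrow> real^'n \<Rightarrow> real \<Rightarrow> real) \<Rightarrow> bool" where
  "heat_kernel_hyps w cs Cs G \<longleftrightarrow>
     (\<forall>x y t. t > 0 \<longrightarrow>
        (\<integral>z. G z y t \<partial>wmeasure w) = 1 \<and> (\<integral>z. G x z t \<partial>wmeasure w) = 1) \<and>
     (\<forall>x y t s. 0 < s \<and> s < t \<longrightarrow>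
        G x y t = (\<integral>\<xi>. G x \<xi> (t - s) * G \<xi> y s \<partial>wmeasure w)) \<and>
     (\<forall>x y t. t > 0 \<longrightarrow>
        cs * exp (- (dist x y)\<^sup>2 / (cs * t))
          \<le> sqrt (wvol w (ball x (sqrt t)) * wvol w (ball y (sqrt t))) * G x y t \<and>
        sqrt (wvol w (ball x (sqrt t)) * wvol w (ball y (sqrt t))) * G x y t
          \<le> Cs * exp (- (dist x y)\<^sup>2 / (Cs * t)))"

end

theory Submission
  imports Defs
begin


lemma weight_props:
  fixes w :: "real^'n::finite \<Rightarrow> real"
  assumes "(\<exists>i1. 0 \<le> \<alpha> \<and> \<alpha> < 1 \<and> w = weightA i1 \<alpha>) \<or> (0 \<le> \<alpha> \<and> \<alpha> < real CARD('n) \<and> w = weightB \<alpha>)"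
  shows "\<exists>i. 0 \<le> \<alpha> \<and> (\<forall>x. \<bar>x$i\<bar> powr \<alpha> \<le> w x) \<and> (\<forall>x. w x \<le> (norm x + 1) powr \<alpha>) \<and> w \<in> borel_measurable borel"
  using assms
proof
  assume "\<exists>i1. 0 \<le> \<alpha> \<and> \<alpha> < 1 \<and> w = weightA i1 \<alpha>"
  then obtain i where a: "0 \<le> \<alpha>" and w: "w = weightA i \<alpha>" by auto
  have "\<bar>x$i\<bar> powr \<alpha> \<le> w x" for x
  proof (cases "\<alpha> = 0")
    case True then show ?thesis by (simp add: w weightA_def powr_def)
  qed (simp add: w weightA_def)
  moreover have "w x \<le> (norm x + 1) powr \<alpha>" for x
  proof (cases "\<alpha> = 0")
    case True then show ?thesis by (simp add: w weightA_def) (metis add_nonneg_pos norm_ge_zero zero_less_one less_irrefl)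
  next
    case False
    have "\<bar>x$i\<bar> \<le> norm x + 1" using component_le_norm_cart[of x i] by linarith
    then show ?thesis using False a by (simp add: w weightA_def powr_mono2)
  qed
  moreover have "w \<in> borel_measurable borel" unfolding w weightA_def by measurable
  ultimately show ?thesis using a by blast
next
  assume "0 \<le> \<alpha> \<and> \<alpha> < real CARD('n) \<and> w = weightB \<alpha>"
  then have a: "0 \<le> \<alpha>" and w: "w = weightB \<alpha>" by auto
  have "\<bar>x$i\<bar> powr \<alpha> \<le> w x" for x i
  proof (cases "\<alpha> = 0")
    case True then show ?thesis by (simp add: w weightB_def powr_def)
  next
    case False then show ?thesis using a component_le_norm_cart[of x i] by (simp add: w weightB_def powr_mono2)
  qed
  moreover have "w x \<le> (norm x + 1) powr \<alpha>" for x
  proof (cases "\<alpha> = 0")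
    case True then show ?thesis by (simp add: w weightB_def) (metis add_nonneg_pos norm_ge_zero zero_less_one less_irrefl)
  next
    case False
    then show ?thesis using False a by (simp add: w weightB_def powr_mono2)
  qed
  moreover have "w \<in> borel_measurable borel" unfolding w weightB_def by measurable
  ultimately show ?thesis using a by blast
qed




lemma emeasure_wmeasure:
  assumes "w \<in> borel_measurable borel" "A \<in> sets lborel"
  shows "emeasure (wmeasure w) A = (\<integral>\<^sup>+x. ennreal (w x) * indicator A x \<partial>lborel)"
  unfolding wmeasure_def using assms by (simp add: emeasure_density)

lemma wvol_ball_lower:
  fixes w :: "real^'n::finite \<Rightarrow> real"
  assumes a: "0 \<le> \<alpha>" and lw: "\<And>x. \<bar>x$i\<bar> powr \<alpha> \<le> w x"
    and uw: "\<And>x. w x \<le> (norm x+1) powr \<alpha>" and wm: "w \<in> borel_measurable borel" and rho: "\<rho> > 0"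
  shows "(\<rho>/4) powr \<alpha> * ((\<rho>/4)^CARD('n) * measure lborel (ball (0::real^'n) 1)) \<le> wvol w (ball y \<rho>)"
proof -
  define c where "c = (if y$i \<ge> 0 then \<rho>/2 else -\<rho>/2)"
  define z where "z = y + c *\<^sub>R axis i 1"
  have nc: "norm (z - y) = \<rho>/2" using rho by (simp add: z_def c_def)
  have sub: "ball z (\<rho>/4) \<subseteq> ball y \<rho>"
  proof
    fix x assume "x \<in> ball z (\<rho>/4)"
    then have "dist x z < \<rho>/4" by (simp add: dist_commute)
    moreover have "dist x y \<le> dist x z + dist z y" by (rule dist_triangle)
    moreover have "dist z y = \<rho>/2" using nc by (simp add: dist_norm)
    ultimately show "x \<in> ball y \<rho>" using rho by (simp add: dist_commute)
  qed
  have zi: "\<bar>z$i\<bar> \<ge> \<rho>/2" using rho by (auto simp: z_def c_def axis_def)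
  have lowb: "(\<rho>/4) powr \<alpha> \<le> w x" if "x \<in> ball z (\<rho>/4)" for x
  proof -
    have "\<bar>(x - z)$i\<bar> \<le> norm (x - z)" by (rule component_le_norm_cart)
    also have "\<dots> < \<rho>/4" using that by (simp add: dist_norm norm_minus_commute)
    finally have d: "\<bar>x$i - z$i\<bar> < \<rho>/4" by simp
    have "\<bar>z$i\<bar> \<le> \<bar>x$i\<bar> + \<bar>x$i - z$i\<bar>" using abs_triangle_ineq[of "x$i" "z$i - x$i"] abs_minus_commute[of "x$i" "z$i"] by simp
    then have "\<rho>/4 \<le> \<bar>x$i\<bar>" using zi d by linarith
    then have "(\<rho>/4) powr \<alpha> \<le> \<bar>x$i\<bar> powr \<alpha>" using a rho by (intro powr_mono2) auto
    then show ?thesis using lw[of x] by linarith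
  qed
  have meas_ball: "emeasure lborel (ball z (\<rho>/4)) = ennreal ((\<rho>/4)^CARD('n) * measure lborel (ball (0::real^'n) 1))"
    using content_ball_conv_unit_ball[of "\<rho>/4" z] rho emeasure_lborel_ball_finite[of z "\<rho>/4"]
    by (simp add: emeasure_eq_ennreal_measure)
  have "ennreal ((\<rho>/4) powr \<alpha> * ((\<rho>/4)^CARD('n) * measure lborel (ball (0::real^'n) 1)))
        = (\<integral>\<^sup>+x. ennreal ((\<rho>/4) powr \<alpha>) * indicator (ball z (\<rho>/4)) x \<partial>lborel)"
    using rho by (subst nn_integral_cmult_indicator) (auto simp: meas_ball intro!: ennreal_mult)
  also have "\<dots> \<le> (\<integral>\<^sup>+x. ennreal (w x) * indicator (ball y \<rho>) x \<partial>lborel)"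
    using lowb sub by (intro nn_integral_mono) (auto simp: indicator_def ennreal_leI)
  also have "\<dots> = emeasure (wmeasure w) (ball y \<rho>)"
    using wm by (simp add: emeasure_wmeasure)
  finally have L: "ennreal ((\<rho>/4) powr \<alpha> * ((\<rho>/4)^CARD('n) * measure lborel (ball (0::real^'n) 1))) \<le> emeasure (wmeasure w) (ball y \<rho>)" .
  have "emeasure (wmeasure w) (ball y \<rho>) \<le> (\<integral>\<^sup>+x. ennreal ((norm y + \<rho> + 1) powr \<alpha>) * indicator (ball y \<rho>) x \<partial>lborel)"
  proof -
    have "ennreal (w x) * indicator (ball y \<rho>) x \<le> ennreal ((norm y + \<rho> + 1) powr \<alpha>) * indicator (ball y \<rho>) x" for x
    proof (cases "x \<in> ball y \<rho>")
      case True
      then have "norm x \<le> norm y + \<rho>" using norm_triangle_ineq[of y "x - y"] by (auto simp: dist_norm norm_minus_commute)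
      then have "(norm x + 1) powr \<alpha> \<le> (norm y + \<rho> + 1) powr \<alpha>" using a by (intro powr_mono2) auto
      then show ?thesis using True uw[of x] by (simp add: ennreal_leI)
    qed simp
    then show ?thesis using wm by (simp add: emeasure_wmeasure nn_integral_mono)
  qed
  also have "\<dots> = ennreal ((norm y + \<rho> + 1) powr \<alpha>) * emeasure lborel (ball y \<rho>)"
    by (rule nn_integral_cmult_indicator) simp
  also have "\<dots> < \<infinity>" using emeasure_lborel_ball_finite[of y \<rho>] by (simp add: ennreal_mult_less_top)
  finally have fin: "emeasure (wmeasure w) (ball y \<rho>) < \<infinity>" .
  have "emeasure (wmeasure w) (ball y \<rho>) = ennreal (measure (wmeasure w) (ball y \<rho>))"
    using fin by (intro emeasure_eq_ennreal_measure) simp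
  then show ?thesis using L by (simp add: wvol_def ennreal_le_iff)
qed




lemma ball_lower_scaled:
  fixes w :: "real^'n::finite \<Rightarrow> real"
  assumes a: "0 \<le> \<alpha>" and lw: "\<And>x. \<bar>x$i\<bar> powr \<alpha> \<le> w x"
    and uw: "\<And>x. w x \<le> (norm x+1) powr \<alpha>" and wm: "w \<in> borel_measurable borel" and t: "t > 0"
  shows "((1/4) powr \<alpha> * (1/4)^CARD('n) * measure lborel (ball (0::real^'n) 1)) * t powr ((real CARD('n) + \<alpha>)/2)
         \<le> wvol w (ball y (sqrt t))"
proof -
  have st: "sqrt t > 0" using t by simp
  have e: "(sqrt t/4) powr \<alpha> * ((sqrt t/4)^CARD('n) * measure lborel (ball (0::real^'n) 1))
     = ((1/4) powr \<alpha> * (1/4)^CARD('n) * measure lborel (ball (0::real^'n) 1)) * t powr ((real CARD('n) + \<alpha>)/2)"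
  proof -
    have 1: "(sqrt t/4) powr \<alpha> = (1/4) powr \<alpha> * sqrt t powr \<alpha>" using st by (simp add: powr_divide)
    have 2: "(sqrt t/4)^CARD('n) = (1/4)^CARD('n) * sqrt t powr (real CARD('n))"
      using st by (simp add: powr_realpow power_divide)
    have 3: "sqrt t powr \<alpha> * sqrt t powr (real CARD('n)) = t powr ((real CARD('n) + \<alpha>)/2)"
      using t by (simp add: powr_add[symmetric] sqrt_def root_powr_inverse powr_powr add_divide_distrib) (simp add: add.commute)
    show ?thesis unfolding 1 2 3[symmetric] by (simp add: algebra_simps)
  qed
  show ?thesis using wvol_ball_lower[OF a lw uw wm st, of y] e by simp
qed

lemma G_bound:
  assumes hk: "heat_kernel_hyps w cs Cs G" and cs: "cs > 0" and Cs: "Cs > 0" and t: "t > 0"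
    and c0: "c0 > 0" and q: "q > 0"
    and lb: "\<And>y. c0 * q \<le> wvol w (ball y (sqrt t))"
  shows "0 < G x y t" "G x y t \<le> Cs / (c0 * q)"
proof -
  let ?P = "wvol w (ball x (sqrt t)) * wvol w (ball y (sqrt t))"
  have "(c0*q) * (c0*q) \<le> ?P" using lb[of x] lb[of y] c0 q by (intro mult_mono) (auto simp: wvol_def)
  then have sP: "c0 * q \<le> sqrt ?P" using c0 q by (metis real_le_rsqrt power2_eq_square less_eq_real_def mult_pos_pos)
  have K: "cs * exp (- (dist x y)\<^sup>2 / (cs * t)) \<le> sqrt ?P * G x y t"
          "sqrt ?P * G x y t \<le> Cs * exp (- (dist x y)\<^sup>2 / (Cs * t))"
    using hk t unfolding heat_kernel_hyps_def by blast+
  have pos: "0 < sqrt ?P" using sP mult_pos_pos[OF c0 q] by linarith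
  have "0 < cs * exp (- (dist x y)\<^sup>2 / (cs * t))" using cs by simp
  then have "0 < sqrt ?P * G x y t" using K(1) by linarith
  then show G0: "0 < G x y t" using pos zero_less_mult_pos by blast
  have "exp (- (dist x y)\<^sup>2 / (Cs * t)) \<le> 1" using Cs t by simp
  then have "Cs * exp (- (dist x y)\<^sup>2 / (Cs * t)) \<le> Cs * 1" using Cs by (intro mult_left_mono) auto
  then have "sqrt ?P * G x y t \<le> Cs" using K(2) by linarith
  moreover have "(c0 * q) * G x y t \<le> sqrt ?P * G x y t" using sP G0 by (intro mult_right_mono) auto
  ultimately have "(c0 * q) * G x y t \<le> Cs" by linarith
  then show "G x y t \<le> Cs / (c0 * q)" using c0 q by (simp add: field_simps)
qed

lemma rearr_le_sup:
  assumes "\<And>y. \<bar>f y\<bar> \<le> M" "M > 0" "s \<ge> 0"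
  shows "rearr w f s \<le> ennreal M"
proof -
  have "{x. M < \<bar>f x\<bar>} = {}" using assms(1) by (auto simp: not_less)
  then have "distfun w f M = 0" by (simp add: distfun_def)
  then have "M \<in> {lam::real. lam > 0 \<and> distfun w f lam \<le> ennreal s}" using assms by simp
  then show ?thesis unfolding rearr_def by (rule INF_lower)
qed

lemma rearr_le_inv:
  assumes fm: "f \<in> borel_measurable lborel" and wm: "w \<in> borel_measurable borel"
    and I: "(\<integral>\<^sup>+y. ennreal \<bar>f y\<bar> \<partial>wmeasure w) = 1" and s: "s > 0"
  shows "rearr w f s \<le> ennreal (1/s)"
proof -
  have sets: "sets (wmeasure w) = sets lborel" by (simp add: wmeasure_def)
  have fm': "(\<lambda>y. ennreal \<bar>f y\<bar> * indicator UNIV y) \<in> borel_measurable (wmeasure w)"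
    using fm by (simp add: measurable_cong_sets[OF sets refl])
  have "distfun w f (1/s) \<le> emeasure (wmeasure w) {x\<in>UNIV. 1 \<le> ennreal s * ennreal \<bar>f x\<bar>}"
    unfolding distfun_def
  proof (rule emeasure_mono)
    show "{x. 1 / s < \<bar>f x\<bar>} \<subseteq> {x \<in> UNIV. 1 \<le> ennreal s * ennreal \<bar>f x\<bar>}"
    proof safe
      fix x assume "1/s < \<bar>f x\<bar>"
      then have "1 \<le> s * \<bar>f x\<bar>" using s by (simp add: field_simps)
      then show "1 \<le> ennreal s * ennreal \<bar>f x\<bar>" using s by (simp add: ennreal_mult[symmetric] ennreal_ge_1)
    qed simp
    show "{x \<in> UNIV. 1 \<le> ennreal s * ennreal \<bar>f x\<bar>} \<in> sets (wmeasure w)"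
      using fm unfolding sets by measurable
  qed
  also have "\<dots> \<le> ennreal s * (\<integral>\<^sup>+ x. ennreal \<bar>f x\<bar> * indicator UNIV x \<partial>wmeasure w)"
    using nn_integral_Markov_inequality[OF fm', of "ennreal s"] by (simp add: wmeasure_def)
  also have "\<dots> = ennreal s" using I by simp
  finally have "distfun w f (1/s) \<le> ennreal s" .
  then have "1/s \<in> {lam::real. lam > 0 \<and> distfun w f lam \<le> ennreal s}" using s by simp
  then show ?thesis unfolding rearr_def by (rule INF_lower)
qed




lemma int_bound_gt1:
  fixes F :: "real \<Rightarrow> ennreal"
  assumes r: "1 < r" and M: "M > 0" and F1: "\<And>s. s>0 \<Longrightarrow> F s \<le> ennreal M"
    and F2: "\<And>s. s>0 \<Longrightarrow> F s \<le> ennreal (1/s)"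
  shows "(\<integral>\<^sup>+ s. indicator {0<..} s * ennreal (s powr (1/r - 1)) * F s \<partial>lborel)
         \<le> ennreal ((r + r/(r-1)) * M powr (1 - 1/r))"
proof -
  define p where "p = 1/r"
  have p0: "0 < p" and p1: "p < 1" using r by (auto simp: p_def)
  have iM: "1/M > 0" using M by simp
  have pw: "indicator {0<..} s * ennreal (s powr (p - 1)) * F s
      \<le> ennreal (M * s powr (p-1)) * indicator {0..1/M} s + ennreal (s powr (p-2)) * indicator {1/M..} s" for s
  proof (cases "s > 0")
    case False then show ?thesis by simp
  next
    case s: True
    show ?thesis
    proof (cases "s \<le> 1/M")
      case True
      have "indicator {0<..} s * ennreal (s powr (p - 1)) * F s = ennreal (s powr (p - 1)) * F s" using s by simp
      also have "\<dots> \<le> ennreal (s powr (p - 1)) * ennreal M" using F1[OF s] by (intro mult_left_mono) auto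
      also have "\<dots> = ennreal (M * s powr (p-1))" using M by (simp add: ennreal_mult[symmetric] mult.commute)
      also have "\<dots> = ennreal (M * s powr (p-1)) * indicator {0..1/M} s" using True s by simp
      finally show ?thesis by (simp add: add_increasing2)
    next
      case False
      have "indicator {0<..} s * ennreal (s powr (p - 1)) * F s = ennreal (s powr (p - 1)) * F s" using s by simp
      also have "\<dots> \<le> ennreal (s powr (p - 1)) * ennreal (1/s)" using F2[OF s] by (intro mult_left_mono) auto
      also have "\<dots> = ennreal (s powr (p-1) / s)" using s by (simp add: ennreal_mult[symmetric])
      also have "s powr (p-1) / s = s powr (p-2)" using s powr_diff[of s "p-1" 1] by simp
      also have "ennreal (s powr (p-2)) = ennreal (s powr (p-2)) * indicator {1/M..} s" using False by simp
      finally show ?thesis by (simp add: add_increasing)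
    qed
  qed
  have I1: "((\<lambda>s. M * s powr (p-1)) has_integral M * ((1/M) powr p / p)) {0..1/M}"
    using has_integral_powr_from_0[of "p-1" "1/M"] p0 iM by (intro has_integral_mult_right) simp
  have I2: "((\<lambda>s. s powr (p-2)) has_integral -((1/M) powr (p-1)) / (p-1)) {1/M..}"
    using has_integral_powr_to_inf[of "p-2" "1/M"] p1 iM by simp
  have n1: "(\<integral>\<^sup>+ s. ennreal (M * s powr (p-1)) * indicator {0..1/M} s \<partial>lborel) = ennreal (M * ((1/M) powr p / p))"
    using M by (intro nn_integral_has_integral_lebesgue'[OF _ I1]) simp
  have n2: "(\<integral>\<^sup>+ s. ennreal (s powr (p-2)) * indicator {1/M..} s \<partial>lborel) = ennreal (-((1/M) powr (p-1)) / (p-1))"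
    by (intro nn_integral_has_integral_lebesgue'[OF _ I2]) simp
  have "(\<integral>\<^sup>+ s. indicator {0<..} s * ennreal (s powr (1/r - 1)) * F s \<partial>lborel)
     \<le> (\<integral>\<^sup>+ s. ennreal (M * s powr (p-1)) * indicator {0..1/M} s + ennreal (s powr (p-2)) * indicator {1/M..} s \<partial>lborel)"
    using pw unfolding p_def by (intro nn_integral_mono) auto
  also have "\<dots> = (\<integral>\<^sup>+ s. ennreal (M * s powr (p-1)) * indicator {0..1/M} s \<partial>lborel) + (\<integral>\<^sup>+ s. ennreal (s powr (p-2)) * indicator {1/M..} s \<partial>lborel)"
    by (intro nn_integral_add) auto
  also have "\<dots> = ennreal (M * ((1/M) powr p / p) + (-((1/M) powr (p-1)) / (p-1)))"
    unfolding n1 n2 using M p0 p1 by (intro ennreal_plus[symmetric]) (auto simp: divide_nonneg_neg)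
  also have "M * ((1/M) powr p / p) + (-((1/M) powr (p-1)) / (p-1)) = (r + r/(r-1)) * M powr (1 - 1/r)"
  proof -
    have a: "M * (1/M) powr p = M powr (1-p)" using M by (simp add: powr_divide powr_diff)
    have b: "(1/M) powr (p-1) = M powr (1-p)" using M by (simp add: powr_divide powr_diff powr_minus_divide)
    have c: "1/p = r" "-1/(p-1) = r/(r-1)" using r by (auto simp: p_def field_simps)
    have "M * ((1/M) powr p / p) + (-((1/M) powr (p-1)) / (p-1)) = M powr (1-p) * (1/p) + M powr (1-p) * (-1/(p-1))"
      using a b by (simp add: field_simps)
    then show ?thesis unfolding c by (simp add: p_def algebra_simps)
  qed
  finally show ?thesis .
qed




lemma emeasure_lborel_below:
  "emeasure lborel {s::real. 0 < s \<and> ennreal s < m} = m"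
proof (cases m rule: ennreal_cases)
  case (real r)
  have "{s::real. 0 < s \<and> ennreal s < m} = {0<..<r}"
    using real by (auto simp: ennreal_less_iff)
  then show ?thesis using real by simp
next
  case top
  have e: "{s::real. 0 < s \<and> ennreal s < m} = {0<..}" using top by auto
  show ?thesis
  proof (rule ccontr)
    assume "emeasure lborel {s::real. 0 < s \<and> ennreal s < m} \<noteq> m"
    then have "emeasure lborel {0::real<..} < top" using top e by (simp add: top.not_eq_extremum)
    then obtain E where E: "emeasure lborel {0::real<..} = ennreal E" "0 \<le> E"
      by (cases "emeasure lborel {0::real<..}" rule: ennreal_cases) auto
    have "emeasure lborel {0<..<E+1} \<le> emeasure lborel {0::real<..}"
      by (intro emeasure_mono) auto
    then have "ennreal (E+1) \<le> ennreal E" using E by simp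
    then show False using E by (simp add: ennreal_le_iff)
  qed
qed

lemma int_bound_eq1:
  fixes f :: "real^'n::finite \<Rightarrow> real"
  assumes fm[measurable]: "f \<in> borel_measurable lborel" and wm[measurable]: "w \<in> borel_measurable borel"
    and I: "(\<integral>\<^sup>+y. ennreal \<bar>f y\<bar> \<partial>wmeasure w) = 1"
  shows "(\<integral>\<^sup>+ s. indicator {0<..} s * rearr w f s \<partial>lborel) \<le> 1"
proof -
  define mu where "mu l = (\<integral>\<^sup>+x. (if l < \<bar>f x\<bar> then ennreal (w x) else 0) \<partial>lborel)" for l :: real
  have wm': "w \<in> borel_measurable lborel" by simp
  have mu_meas[measurable]: "mu \<in> borel_measurable lborel"
    unfolding mu_def by measurable
  have mu_eq: "distfun w f l = mu l" for l
    unfolding distfun_def mu_def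
    by (subst emeasure_wmeasure) (auto intro!: nn_integral_cong simp: indicator_def)
  have mu_mono: "mu l' \<le> mu l" if "l \<le> l'" for l l'
    unfolding mu_def using that by (intro nn_integral_mono) auto
  define S where "S s = {l. 0 < l \<and> ennreal s < mu l}" for s
  have S_meas: "S s \<in> sets lborel" for s unfolding S_def by measurable
  have stepa: "rearr w f s \<le> emeasure lborel (S s)" for s
  proof (rule ennreal_le_epsilon)
    fix e :: real assume lt: "emeasure lborel (S s) < top" and e: "0 < e"
    then obtain E where E: "emeasure lborel (S s) = ennreal E" "0 \<le> E"
      by (cases "emeasure lborel (S s)" rule: ennreal_cases) auto
    define l where "l = E + e"
    have l0: "0 < l" using E e by (simp add: l_def)
    have "\<not> ennreal s < mu l"
    proof
      assume a: "ennreal s < mu l"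
      have "{0<..l} \<subseteq> S s"
      proof
        fix l' assume "l' \<in> {0<..l}"
        then show "l' \<in> S s" using a mu_mono[of l' l] by (auto simp: S_def)
      qed
      then have "emeasure lborel {0<..l} \<le> emeasure lborel (S s)" using S_meas by (intro emeasure_mono) auto
      then have "ennreal l \<le> ennreal E" using E l0 by simp
      then show False using E e by (simp add: ennreal_le_iff l_def)
    qed
    then have "distfun w f l \<le> ennreal s" by (simp add: mu_eq not_less)
    then have "l \<in> {lam::real. lam > 0 \<and> distfun w f lam \<le> ennreal s}" using l0 by simp
    then have "rearr w f s \<le> ennreal l" unfolding rearr_def by (rule INF_lower)
    also have "\<dots> = emeasure lborel (S s) + ennreal e" using E e by (simp add: l_def ennreal_plus)
    finally show "rearr w f s \<le> emeasure lborel (S s) + ennreal e" .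
  qed
  define g where "g s l = (if 0 < s \<and> 0 < l \<and> ennreal s < mu l then 1 else 0 :: ennreal)" for s l :: real
  have g_meas: "case_prod g \<in> borel_measurable (lborel \<Otimes>\<^sub>M lborel)"
    unfolding g_def by measurable
  define h where "h l x = (if 0 < l \<and> l < \<bar>f x\<bar> then ennreal (w x) else 0)" for l :: real and x :: "real^'n"
  have h_meas: "case_prod h \<in> borel_measurable (lborel \<Otimes>\<^sub>M lborel)"
    unfolding h_def by measurable
  have "(\<integral>\<^sup>+ s. indicator {0<..} s * rearr w f s \<partial>lborel) \<le> (\<integral>\<^sup>+ s. indicator {0<..} s * emeasure lborel (S s) \<partial>lborel)"
    using stepa by (intro nn_integral_mono mult_left_mono) auto
  also have "\<dots> = (\<integral>\<^sup>+ s. (\<integral>\<^sup>+ l. g s l \<partial>lborel) \<partial>lborel)"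
  proof (intro nn_integral_cong)
    fix s :: real
    show "indicator {0<..} s * emeasure lborel (S s) = (\<integral>\<^sup>+ l. g s l \<partial>lborel)"
    proof (cases "0 < s")
      case True
      have "(\<integral>\<^sup>+ l. g s l \<partial>lborel) = (\<integral>\<^sup>+ l. indicator (S s) l \<partial>lborel)"
        using True by (intro nn_integral_cong) (auto simp: g_def S_def indicator_def)
      then show ?thesis using True S_meas by simp
    next
      case False then show ?thesis by (simp add: g_def)
    qed
  qed
  also have "\<dots> = (\<integral>\<^sup>+ l. (\<integral>\<^sup>+ s. g s l \<partial>lborel) \<partial>lborel)"
    using lborel_pair.Fubini'[OF g_meas] by simp
  also have "\<dots> = (\<integral>\<^sup>+ l. (\<integral>\<^sup>+ x. h l x \<partial>lborel) \<partial>lborel)"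
  proof (intro nn_integral_cong)
    fix l :: real
    show "(\<integral>\<^sup>+ s. g s l \<partial>lborel) = (\<integral>\<^sup>+ x. h l x \<partial>lborel)"
    proof (cases "0 < l")
      case True
      have "(\<integral>\<^sup>+ s. g s l \<partial>lborel) = (\<integral>\<^sup>+ s. indicator {s. 0 < s \<and> ennreal s < mu l} s \<partial>lborel)"
        using True by (intro nn_integral_cong) (auto simp: g_def indicator_def)
      also have "\<dots> = mu l" by (subst nn_integral_indicator) (auto simp: emeasure_lborel_below)
      also have "\<dots> = (\<integral>\<^sup>+ x. h l x \<partial>lborel)" unfolding mu_def h_def using True by simp
      finally show ?thesis .
    next
      case False then show ?thesis by (simp add: g_def h_def)
    qed
  qed
  also have "\<dots> = (\<integral>\<^sup>+ x. (\<integral>\<^sup>+ l. h l x \<partial>lborel) \<partial>lborel)"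
    using lborel_pair.Fubini'[OF h_meas] by simp
  also have "\<dots> = (\<integral>\<^sup>+ x. ennreal (w x) * ennreal \<bar>f x\<bar> \<partial>lborel)"
  proof (intro nn_integral_cong)
    fix x :: "real^'n"
    have "(\<integral>\<^sup>+ l. h l x \<partial>lborel) = (\<integral>\<^sup>+ l. ennreal (w x) * indicator {0<..<\<bar>f x\<bar>} l \<partial>lborel)"
      by (intro nn_integral_cong) (auto simp: h_def indicator_def)
    also have "\<dots> = ennreal (w x) * ennreal \<bar>f x\<bar>" by (subst nn_integral_cmult_indicator) auto
    finally show "(\<integral>\<^sup>+ l. h l x \<partial>lborel) = ennreal (w x) * ennreal \<bar>f x\<bar>" .
  qed
  also have "\<dots> = (\<integral>\<^sup>+y. ennreal \<bar>f y\<bar> \<partial>wmeasure w)"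
    unfolding wmeasure_def by (subst nn_integral_density) auto
  also have "\<dots> = 1" by (rule I)
  finally show ?thesis .
qed




theorem lemma2p2:
  fixes \<alpha> r :: real
  assumes "1 \<le> r"
  shows "\<forall>cs Cs. cs > 0 \<and> Cs > 0 \<longrightarrow>
    (\<exists>C>0. \<forall>(w :: real^'n::finite \<Rightarrow> real) (G :: real^'n \<Rightarrow> real^'n \<Rightarrow> real \<Rightarrow> real).
       ((\<exists>i1. 0 \<le> \<alpha> \<and> \<alpha> < 1 \<and> w = weightA i1 \<alpha>) \<or>
        (0 \<le> \<alpha> \<and> \<alpha> < real CARD('n) \<and> w = weightB \<alpha>)) \<longrightarrow>
       heat_kernel_hyps w cs Cs G \<longrightarrow>
       (\<forall>x t. t > 0 \<longrightarrow>
          lorentz_norm w r (\<lambda>y. G x y t)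
            \<le> ennreal (C * t powr (- ((real CARD('n) + \<alpha>) / 2) * (1 - 1 / r)))))"
proof (intro allI impI)
  fix cs Cs :: real assume ccs: "cs > 0 \<and> Cs > 0"
  then have cs: "cs > 0" and Cs: "Cs > 0" by auto
  define c0 where "c0 = (1/4) powr \<alpha> * (1/4)^CARD('n) * measure lborel (ball (0::real^'n) 1)"
  have c0: "c0 > 0" unfolding c0_def using content_ball_pos[of 1 "0::real^'n"] by simp
  define K where "K = Cs / c0"
  define C where "C = (if r = 1 then 1 else (r + r/(r-1)) * K powr (1 - 1/r))"
  have C0: "C > 0" using assms Cs c0 by (auto simp: C_def K_def intro!: mult_pos_pos add_pos_pos divide_pos_pos)
  show "\<exists>C>0. \<forall>(w :: real^'n::finite \<Rightarrow> real) (G :: real^'n \<Rightarrow> real^'n \<Rightarrow> real \<Rightarrow> real).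
       ((\<exists>i1. 0 \<le> \<alpha> \<and> \<alpha> < 1 \<and> w = weightA i1 \<alpha>) \<or>
        (0 \<le> \<alpha> \<and> \<alpha> < real CARD('n) \<and> w = weightB \<alpha>)) \<longrightarrow>
       heat_kernel_hyps w cs Cs G \<longrightarrow>
       (\<forall>x t. t > 0 \<longrightarrow>
          lorentz_norm w r (\<lambda>y. G x y t)
            \<le> ennreal (C * t powr (- ((real CARD('n) + \<alpha>) / 2) * (1 - 1 / r))))"
  proof (intro exI[of _ C] conjI allI impI C0)
    fix w :: "real^'n \<Rightarrow> real" and G :: "real^'n \<Rightarrow> real^'n \<Rightarrow> real \<Rightarrow> real" and x :: "real^'n" and t :: real
    assume wc: "(\<exists>i1. 0 \<le> \<alpha> \<and> \<alpha> < 1 \<and> w = weightA i1 \<alpha>) \<or> (0 \<le> \<alpha> \<and> \<alpha> < real CARD('n) \<and> w = weightB \<alpha>)"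
      and hk: "heat_kernel_hyps w cs Cs G" and t: "t > 0"
    obtain i where a: "0 \<le> \<alpha>" and lw: "\<And>x. \<bar>x$i\<bar> powr \<alpha> \<le> w x"
      and uw: "\<And>x. w x \<le> (norm x + 1) powr \<alpha>" and wm[measurable]: "w \<in> borel_measurable borel"
      using weight_props[OF wc] by blast
    define q where "q = t powr ((real CARD('n) + \<alpha>)/2)"
    have q: "q > 0" using t by (simp add: q_def)
    have lb: "c0 * q \<le> wvol w (ball y (sqrt t))" for y
      using ball_lower_scaled[OF a lw uw wm t, of y] by (simp add: c0_def q_def)
    define M where "M = Cs / (c0 * q)"
    have M: "M > 0" using Cs c0 q by (simp add: M_def)
    define f where "f = (\<lambda>y. G x y t)"
    have fpos: "0 < f y" and fle: "f y \<le> M" for y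
      using G_bound[OF hk cs Cs t c0 q lb] by (auto simp: f_def M_def)
    have int1: "(\<integral>z. f z \<partial>wmeasure w) = 1" using hk t unfolding heat_kernel_hyps_def f_def by blast
    then have intg: "integrable (wmeasure w) f" using not_integrable_integral_eq by fastforce
    have sets: "sets (wmeasure w) = sets lborel" by (simp add: wmeasure_def)
    have fm: "f \<in> borel_measurable lborel"
      using borel_measurable_integrable[OF intg] by (simp add: measurable_cong_sets[OF sets refl])
    have I: "(\<integral>\<^sup>+y. ennreal \<bar>f y\<bar> \<partial>wmeasure w) = 1"
    proof -
      have "(\<integral>\<^sup>+y. ennreal \<bar>f y\<bar> \<partial>wmeasure w) = (\<integral>\<^sup>+y. ennreal (f y) \<partial>wmeasure w)"
        using fpos by (intro nn_integral_cong) (simp add: less_imp_le)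
      also have "\<dots> = ennreal (\<integral>z. f z \<partial>wmeasure w)"
        using intg fpos by (intro nn_integral_eq_integral) (auto simp: less_imp_le)
      finally show ?thesis using int1 by simp
    qed
    have fabs: "\<bar>f y\<bar> \<le> M" for y using fpos[of y] fle[of y] by simp
    show "lorentz_norm w r (\<lambda>y. G x y t) \<le> ennreal (C * t powr (- ((real CARD('n) + \<alpha>) / 2) * (1 - 1 / r)))"
    proof (cases "r = 1")
      case True
      have "lorentz_norm w r (\<lambda>y. G x y t) = (\<integral>\<^sup>+ s. indicator {0<..} s * rearr w f s \<partial>lborel)"
        unfolding lorentz_norm_def f_def[symmetric] True
        by (intro nn_integral_cong) (auto simp: indicator_def)
      also have "\<dots> \<le> 1" by (rule int_bound_eq1[OF fm wm I])
      finally show ?thesis using True t by (simp add: C_def)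
    next
      case False
      then have r1: "r > 1" using assms by simp
      have "lorentz_norm w r (\<lambda>y. G x y t) \<le> ennreal ((r + r/(r-1)) * M powr (1 - 1/r))"
        unfolding lorentz_norm_def f_def[symmetric]
        by (rule int_bound_gt1[OF r1 M]) (auto intro: rearr_le_sup[OF fabs M] rearr_le_inv[OF fm wm I])
      also have "M powr (1 - 1/r) = K powr (1 - 1/r) * t powr (- ((real CARD('n) + \<alpha>) / 2) * (1 - 1 / r))"
      proof -
        have "M powr (1 - 1/r) = K powr (1 - 1/r) / q powr (1 - 1/r)"
          unfolding M_def K_def using Cs c0 q by (simp add: powr_divide powr_mult)
        also have "q powr (1 - 1/r) = t powr (((real CARD('n) + \<alpha>) / 2) * (1 - 1 / r))"
          unfolding q_def by (simp add: powr_powr)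
        finally show ?thesis by (simp add: powr_minus_divide)
      qed
      finally show ?thesis using False by (simp add: C_def mult.assoc)
    qed
  qed
qed


end
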